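(* Let $\mathcal H=(M,n,\mathcal R)$ be an MMS, $S$ a closed bounded convex polytope, $x_0\in S$, and let $0<\Delta'\le\Delta$ satisfy $D_\Delta\cap S=g_{\Delta',\Delta}(D_{\Delta'}\cap S)$. If the scheduler has a winning strategy from $x_0$ in $\Sigma_{\Delta'}$, then the scheduler has a winning strategy from $x_0$ in $\Sigma_\Delta$.
   Context: An MMS is a tuple $\mathcal H=(M,n,\mathcal R)$ with $M$ a finite nonempty set of modes and $\mathcal R(m)\subseteq\mathbb R^n$ finite nonempty for each mode; let $R=\bigcup_m\mathcal R(m)$. For $\Delta>0$ let $D_\Delta=\{x_0+\Delta\sum_{r\in R}i_r r: i_r\in\mathbb N\}$, and let $g_{\Delta',\Delta}:D_{\Delta'}\to D_\Delta$ send $x_0+\Delta'\sum_{r}i_r r$ to $x_0+\Delta\sum_r i_r r$ (well defined). The schedulability game from $x_0$: in round $i\ge1$ the scheduler chooses $(m_i,t_i)\in M\times\mathbb R_{>0}$, the environment chooses $r_i\in\mathcal R(m_i)$, and $x_i=x_{i-1}+t_ir_i$; scheduler strategies map finite histories to timed moves. $\Sigma_\Delta$ is the set of scheduler strategies all of whose chosen delays are positive integer multiples of $\Delta$. A scheduler strategy is winning from $x_0$ if against every environment strategy the run satisfies $x_i\in S$ and $x_i+tr_{i+1}\in S$ for all $i\ge0$, $t\in[0,t_{i+1}]$, and $\sum_it_i=\infty$. *)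

theory Defs
  imports "HOL-Analysis.Analysis"
begin

definition MMS :: "'m set \<Rightarrow> ('m \<Rightarrow> (real^'n) set) \<Rightarrow> bool" where
  "MMS M Rr \<longleftrightarrow> finite M \<and> M \<noteq> {} \<and> (\<forall>m\<in>M. finite (Rr m) \<and> Rr m \<noteq> {})"

definition allRates :: "'m set \<Rightarrow> ('m \<Rightarrow> (real^'n) set) \<Rightarrow> (real^'n) set" where
  "allRates M Rr = (\<Union>m\<in>M. Rr m)"

definition grid :: "'m set \<Rightarrow> ('m \<Rightarrow> (real^'n) set) \<Rightarrow> real^'n \<Rightarrow> real \<Rightarrow> (real^'n) set" where
  "grid M Rr x0 \<Delta> = {x0 + \<Delta> *\<^sub>R (\<Sum>r\<in>allRates M Rr. real (i r) *\<^sub>R r) | i :: real^'n \<Rightarrow> nat. True}"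

definition gmap :: "'m set \<Rightarrow> ('m \<Rightarrow> (real^'n) set) \<Rightarrow> real^'n \<Rightarrow> real \<Rightarrow> real \<Rightarrow> real^'n \<Rightarrow> real^'n" where
  "gmap M Rr x0 \<Delta>' \<Delta> y =
     (let i = (SOME i :: real^'n \<Rightarrow> nat. y = x0 + \<Delta>' *\<^sub>R (\<Sum>r\<in>allRates M Rr. real (i r) *\<^sub>R r))
      in x0 + \<Delta> *\<^sub>R (\<Sum>r\<in>allRates M Rr. real (i r) *\<^sub>R r))"

(* Histories: lists of completed rounds (m_i, t_i, r_i). *)
type_synonym ('m, 'n) history = "('m \<times> real \<times> (real^'n)) list"

definition sched_strategy :: "'m set \<Rightarrow> (('m, 'n) history \<Rightarrow> 'm \<times> real) \<Rightarrow> bool" where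
  "sched_strategy M \<sigma> \<longleftrightarrow> (\<forall>h. fst (\<sigma> h) \<in> M \<and> snd (\<sigma> h) > 0)"

definition env_strategy :: "'m set \<Rightarrow> ('m \<Rightarrow> (real^'n) set)
      \<Rightarrow> (('m, 'n) history \<Rightarrow> 'm \<times> real \<Rightarrow> real^'n) \<Rightarrow> bool" where
  "env_strategy M Rr \<epsilon> \<longleftrightarrow> (\<forall>h m t. m \<in> M \<longrightarrow> \<epsilon> h (m, t) \<in> Rr m)"

definition Sigma_grid :: "'m set \<Rightarrow> real \<Rightarrow> (('m, 'n) history \<Rightarrow> 'm \<times> real) set" where
  "Sigma_grid M \<Delta> = {\<sigma>. sched_strategy M \<sigma> \<and> (\<forall>h. \<exists>k::nat. k \<ge> 1 \<and> snd (\<sigma> h) = real k * \<Delta>)}"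

fun play :: "(('m, 'n) history \<Rightarrow> 'm \<times> real) \<Rightarrow> (('m, 'n) history \<Rightarrow> 'm \<times> real \<Rightarrow> real^'n)
      \<Rightarrow> nat \<Rightarrow> ('m, 'n) history" where
  "play \<sigma> \<epsilon> 0 = []"
| "play \<sigma> \<epsilon> (Suc k) = (let h = play \<sigma> \<epsilon> k in h @ [(fst (\<sigma> h), snd (\<sigma> h), \<epsilon> h (\<sigma> h))])"

(* delay t_{i+1} and rate r_{i+1} of round i+1 (0-based index i) *)
definition delay :: "(('m, 'n) history \<Rightarrow> 'm \<times> real) \<Rightarrow> (('m, 'n) history \<Rightarrow> 'm \<times> real \<Rightarrow> real^'n)
      \<Rightarrow> nat \<Rightarrow> real" where
  "delay \<sigma> \<epsilon> i = snd (\<sigma> (play \<sigma> \<epsilon> i))"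

definition rate :: "(('m, 'n) history \<Rightarrow> 'm \<times> real) \<Rightarrow> (('m, 'n) history \<Rightarrow> 'm \<times> real \<Rightarrow> real^'n)
      \<Rightarrow> nat \<Rightarrow> real^'n" where
  "rate \<sigma> \<epsilon> i = \<epsilon> (play \<sigma> \<epsilon> i) (\<sigma> (play \<sigma> \<epsilon> i))"

definition pos :: "real^'n \<Rightarrow> (('m, 'n) history \<Rightarrow> 'm \<times> real) \<Rightarrow> (('m, 'n) history \<Rightarrow> 'm \<times> real \<Rightarrow> real^'n)
      \<Rightarrow> nat \<Rightarrow> real^'n" where
  "pos x0 \<sigma> \<epsilon> i = x0 + (\<Sum>j<i. delay \<sigma> \<epsilon> j *\<^sub>R rate \<sigma> \<epsilon> j)"

definition winning :: "'m set \<Rightarrow> ('m \<Rightarrow> (real^'n) set) \<Rightarrow> (real^'n) set \<Rightarrow> real^'n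
      \<Rightarrow> (('m, 'n) history \<Rightarrow> 'm \<times> real) \<Rightarrow> bool" where
  "winning M Rr S x0 \<sigma> \<longleftrightarrow> sched_strategy M \<sigma> \<and>
     (\<forall>\<epsilon>. env_strategy M Rr \<epsilon> \<longrightarrow>
        (\<forall>i. pos x0 \<sigma> \<epsilon> i \<in> S \<and>
             (\<forall>t\<in>{0..delay \<sigma> \<epsilon> i}. pos x0 \<sigma> \<epsilon> i + t *\<^sub>R rate \<sigma> \<epsilon> i \<in> S)) \<and>
        filterlim (\<lambda>k. \<Sum>j<k. delay \<sigma> \<epsilon> j) at_top sequentially)"

end

theory Submission
  imports Defs
begin

definition scl :: "real \<Rightarrow> (('m, 'n) history \<Rightarrow> 'm \<times> real) \<Rightarrow> (('m, 'n) history \<Rightarrow> 'm \<times> real)" where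
  "scl c \<sigma>' = (\<lambda>h. let p = \<sigma>' (map (\<lambda>(m,t,r). (m, t/c, r)) h) in (fst p, c * snd p))"

definition envt :: "real \<Rightarrow> (('m, 'n) history \<Rightarrow> 'm \<times> real \<Rightarrow> real^'n) \<Rightarrow> (('m, 'n) history \<Rightarrow> 'm \<times> real \<Rightarrow> real^'n)" where
  "envt c \<epsilon> = (\<lambda>h' mt. \<epsilon> (map (\<lambda>(m,t,r). (m, c*t, r)) h') (fst mt, c * snd mt))"

lemma map_inv_hist:
  assumes "(c::real) \<noteq> 0"
  shows "map (\<lambda>(m,t,r). (m, t/c, r)) (map (\<lambda>(m,t,r). (m, c*t, r)) (h :: ('m,'n) history)) = h"
  using assms by (induct h) auto

lemma play_scl:
  assumes "(c::real) \<noteq> 0"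
  shows "play (scl c \<sigma>') \<epsilon> k = map (\<lambda>(m,t,r). (m, c*t, r)) (play \<sigma>' (envt c \<epsilon>) k)"
proof (induct k)
  case 0 then show ?case by simp
next
  case (Suc k)
  show ?case
    apply (simp only: play.simps Let_def Suc)
    apply (simp add: scl_def envt_def map_inv_hist[OF assms] Let_def del: map_map)
    done
qed

lemma delay_scl:
  assumes "(c::real) \<noteq> 0"
  shows "delay (scl c \<sigma>') \<epsilon> i = c * delay \<sigma>' (envt c \<epsilon>) i"
  unfolding delay_def play_scl[OF assms] by (simp add: scl_def Let_def map_inv_hist[OF assms] del: map_map)

lemma rate_scl:
  assumes "(c::real) \<noteq> 0"
  shows "rate (scl c \<sigma>') \<epsilon> i = rate \<sigma>' (envt c \<epsilon>) i"
  unfolding rate_def play_scl[OF assms] by (simp add: scl_def Let_def map_inv_hist[OF assms] envt_def del: map_map)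

lemma pos_scl:
  assumes "(c::real) \<noteq> 0"
  shows "pos x0 (scl c \<sigma>') \<epsilon> i = x0 + c *\<^sub>R (pos x0 \<sigma>' (envt c \<epsilon>) i - x0)"
  by (simp add: pos_def delay_scl[OF assms] rate_scl[OF assms] scaleR_sum_right)

lemma grid_step:
  assumes "y \<in> grid M Rr x0 D" "r \<in> allRates M Rr" "finite (allRates M Rr)"
  shows "y + (real k * D) *\<^sub>R r \<in> grid M Rr x0 D"
proof -
  obtain i where y: "y = x0 + D *\<^sub>R (\<Sum>r\<in>allRates M Rr. real (i r) *\<^sub>R r)"
    using assms(1) unfolding grid_def by blast
  define i' where "i' = (\<lambda>r'. i r' + (if r' = r then k else 0))"
  have "(\<Sum>r'\<in>allRates M Rr. real (i' r') *\<^sub>R r') =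
        (\<Sum>r'\<in>allRates M Rr. real (i r') *\<^sub>R r') + (\<Sum>r'\<in>allRates M Rr. (if r' = r then real k *\<^sub>R r' else 0))"
    unfolding sum.distrib[symmetric] i'_def by (rule sum.cong) (auto simp: scaleR_add_left)
  also have "(\<Sum>r'\<in>allRates M Rr. (if r' = r then real k *\<^sub>R r' else 0)) = real k *\<^sub>R r"
    using assms(2,3) by (simp add: sum.delta)
  finally have "y + (real k * D) *\<^sub>R r = x0 + D *\<^sub>R (\<Sum>r'\<in>allRates M Rr. real (i' r') *\<^sub>R r')"
    by (simp add: y scaleR_add_right)
  then show ?thesis unfolding grid_def by blast
qed

lemma gmap_grid:
  fixes y :: "real^'n" and Rr :: "'m \<Rightarrow> (real^'n) set"
  assumes "y \<in> grid M Rr x0 D'" "D' \<noteq> 0"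
  shows "gmap M Rr x0 D' D y = x0 + (D / D') *\<^sub>R (y - x0)"
proof -
  have ex: "\<exists>i :: real^'n \<Rightarrow> nat. y = x0 + D' *\<^sub>R (\<Sum>r\<in>allRates M Rr. real (i r) *\<^sub>R r)"
    using assms(1) unfolding grid_def by blast
  define i where "i = (SOME i :: real^'n \<Rightarrow> nat. y = x0 + D' *\<^sub>R (\<Sum>r\<in>allRates M Rr. real (i r) *\<^sub>R r))"
  have iy: "y = x0 + D' *\<^sub>R (\<Sum>r\<in>allRates M Rr. real (i r) *\<^sub>R r)"
    unfolding i_def by (rule someI_ex[OF ex])
  have "gmap M Rr x0 D' D y = x0 + D *\<^sub>R (\<Sum>r\<in>allRates M Rr. real (i r) *\<^sub>R r)"
    unfolding gmap_def i_def Let_def by simp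
  also have "\<dots> = x0 + (D / D') *\<^sub>R (y - x0)"
    using assms(2) by (simp add: iy)
  finally show ?thesis .
qed

theorem lemma6:
  fixes M :: "'m set" and Rr :: "'m \<Rightarrow> (real^'n) set" and S :: "(real^'n) set"
    and x0 :: "real^'n" and \<Delta> \<Delta>' :: real
  assumes "MMS M Rr"
    and "polytope S"
    and "x0 \<in> S"
    and "0 < \<Delta>'" and "\<Delta>' \<le> \<Delta>"
    and "grid M Rr x0 \<Delta> \<inter> S = gmap M Rr x0 \<Delta>' \<Delta> ` (grid M Rr x0 \<Delta>' \<inter> S)"
    and "\<exists>\<sigma>\<in>Sigma_grid M \<Delta>'. winning M Rr S x0 \<sigma>"
  shows "\<exists>\<sigma>\<in>Sigma_grid M \<Delta>. winning M Rr S x0 \<sigma>"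
proof -
  obtain \<sigma>' where s': "\<sigma>' \<in> Sigma_grid M \<Delta>'" and w': "winning M Rr S x0 \<sigma>'"
    using assms(7) by blast
  define c where "c = \<Delta> / \<Delta>'"
  have c1: "c \<ge> 1" using assms(4,5) by (simp add: c_def)
  have c0: "c \<noteq> 0" using c1 by simp
  have fin: "finite (allRates M Rr)"
    using assms(1) unfolding MMS_def allRates_def by auto
  have cvx: "convex S" using assms(2) by (rule polytope_imp_convex)
  have ss': "sched_strategy M \<sigma>'" and gr': "\<And>h. \<exists>k::nat. k \<ge> 1 \<and> snd (\<sigma>' h) = real k * \<Delta>'"
    using s' unfolding Sigma_grid_def by auto
  define \<sigma> where "\<sigma> = scl c \<sigma>'"
  have inS: "\<sigma> \<in> Sigma_grid M \<Delta>"
  proof -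
    have "sched_strategy M \<sigma>"
      using ss' c1 unfolding sched_strategy_def \<sigma>_def scl_def Let_def by auto
    moreover have "\<exists>k::nat. k \<ge> 1 \<and> snd (\<sigma> h) = real k * \<Delta>" for h
    proof -
      obtain k::nat where "k \<ge> 1" "snd (\<sigma>' (map (\<lambda>(m,t,r). (m, t/c, r)) h)) = real k * \<Delta>'"
        using gr' by blast
      then show ?thesis using assms(4)
        by (intro exI[of _ k]) (simp add: \<sigma>_def scl_def Let_def c_def)
    qed
    ultimately show ?thesis unfolding Sigma_grid_def by blast
  qed
  have "winning M Rr S x0 \<sigma>"
    unfolding winning_def
  proof (intro conjI allI impI)
    show "sched_strategy M \<sigma>" using inS unfolding Sigma_grid_def by blast
  next
    fix \<epsilon> assume env: "env_strategy M Rr \<epsilon>"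
    define \<epsilon>' where "\<epsilon>' = envt c \<epsilon>"
    have env': "env_strategy M Rr \<epsilon>'"
      using env unfolding env_strategy_def \<epsilon>'_def envt_def by auto
    have W1: "\<And>i. pos x0 \<sigma>' \<epsilon>' i \<in> S"
      and W2: "filterlim (\<lambda>k. \<Sum>j<k. delay \<sigma>' \<epsilon>' j) at_top sequentially"
      using w' env' unfolding winning_def by auto
    have posSuc: "\<And>s e i. pos x0 s e (Suc i) = pos x0 s e i + delay s e i *\<^sub>R rate s e i"
      by (simp add: pos_def)
    have G: "pos x0 \<sigma>' \<epsilon>' i \<in> grid M Rr x0 \<Delta>'" for i
    proof (induct i)
      case 0
      show ?case by (auto simp: grid_def pos_def intro!: exI[of _ "\<lambda>_. 0"])
    next
      case (Suc i)
      obtain k::nat where k: "delay \<sigma>' \<epsilon>' i = real k * \<Delta>'"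
        using gr' unfolding delay_def by blast
      have "rate \<sigma>' \<epsilon>' i \<in> allRates M Rr"
        using env' ss' unfolding rate_def env_strategy_def sched_strategy_def allRates_def
        by (metis (no_types, lifting) UN_iff prod.collapse)
      then show ?case unfolding posSuc k using grid_step[OF Suc _ fin] by blast
    qed
    have P: "pos x0 \<sigma> \<epsilon> i \<in> S" for i
    proof -
      have "gmap M Rr x0 \<Delta>' \<Delta> (pos x0 \<sigma>' \<epsilon>' i) \<in> S"
        using assms(6) G W1 by blast
      then show ?thesis
        using gmap_grid[OF G, of \<Delta>] assms(4) pos_scl[OF c0, of x0 \<sigma>' \<epsilon> i]
        by (simp add: \<sigma>_def \<epsilon>'_def c_def)
    qed
    have dpos: "delay \<sigma> \<epsilon> i > 0" for i
      using inS unfolding Sigma_grid_def sched_strategy_def delay_def by blast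
    show "pos x0 \<sigma> \<epsilon> i \<in> S" for i by (rule P)
    show "\<forall>t\<in>{0..delay \<sigma> \<epsilon> i}. pos x0 \<sigma> \<epsilon> i + t *\<^sub>R rate \<sigma> \<epsilon> i \<in> S" for i
    proof
      fix t assume t: "t \<in> {0..delay \<sigma> \<epsilon> i}"
      define d where "d = delay \<sigma> \<epsilon> i"
      define p where "p = pos x0 \<sigma> \<epsilon> i"
      define r where "r = rate \<sigma> \<epsilon> i"
      have d0: "d > 0" using dpos d_def by simp
      define u where "u = t / d"
      have u: "0 \<le> u" "u \<le> 1" using t d0 by (auto simp: u_def d_def)
      have p1: "p \<in> S" using P p_def by simp
      have p2: "p + d *\<^sub>R r \<in> S" using P[of "Suc i"] posSuc[of \<sigma> \<epsilon> i] p_def d_def r_def by simp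
      have "(1 - u) *\<^sub>R p + u *\<^sub>R (p + d *\<^sub>R r) \<in> S"
        using cvx p1 p2 u unfolding convex_def by auto
      moreover have "(1 - u) *\<^sub>R p + u *\<^sub>R (p + d *\<^sub>R r) = p + t *\<^sub>R r"
        using d0 by (simp add: u_def algebra_simps)
      ultimately show "pos x0 \<sigma> \<epsilon> i + t *\<^sub>R rate \<sigma> \<epsilon> i \<in> S"
        by (simp add: p_def r_def)
    qed
    have dpos': "delay \<sigma>' \<epsilon>' j > 0" for j
      using ss' unfolding sched_strategy_def delay_def by blast
    have "\<forall>\<^sub>F k in sequentially. (\<Sum>j<k. delay \<sigma>' \<epsilon>' j) \<le> (\<Sum>j<k. delay \<sigma> \<epsilon> j)"
    proof (intro always_eventually allI sum_mono)
      fix k j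
      have "delay \<sigma>' \<epsilon>' j \<le> c * delay \<sigma>' \<epsilon>' j"
        using c1 dpos'[of j] by (simp add: mult_le_cancel_right1)
      then show "delay \<sigma>' \<epsilon>' j \<le> delay \<sigma> \<epsilon> j"
        unfolding \<sigma>_def delay_scl[OF c0] \<epsilon>'_def .
    qed
    then show "filterlim (\<lambda>k. \<Sum>j<k. delay \<sigma> \<epsilon> j) at_top sequentially"
      by (rule filterlim_at_top_mono[OF W2])
  qed
  then show ?thesis using inS by blast
qed

end
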